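(* A set $S\subseteq\mathbb{N}^{\mathbb{N}}$ is guessable if and only if it is defined by some sentence $\forall x\,\exists y\,\phi$ of $\mathscr{L}_{\max}$ and also by some sentence $\exists x\,\forall y\,\psi$ of $\mathscr{L}_{\max}$, where $\phi$ and $\psi$ are quantifier-free.
   Context: A function $G:\mathbb{N}^{<\mathbb{N}}\to\{0,1\}$ ($\mathbb{N}^{<\mathbb{N}}$ = finite sequences of naturals) is a guesser for $S\subseteq\mathbb{N}^{\mathbb{N}}$ if for every $f:\mathbb{N}\to\mathbb{N}$ there is $m>0$ such that for all $n>m$, $G(f(0),\ldots,f(n))$ equals $1$ if $f\in S$ and $0$ if $f\notin S$; $S$ is guessable if it has a guesser. The language $\mathscr{L}_{\max}$ is a first-order language extended with ellipses: constant symbols $\mathbf{n}$ (also $\bar n$) for each $n\in\mathbb{N}$; an $n$-ary function symbol $\tilde w$ for each $w:\mathbb{N}^n\to\mathbb{N}$ ($n>0$); an $n$-ary predicate symbol $\tilde p$ for each $p\subseteq\mathbb{N}^n$ ($n>0$); an $\mathbb{N}^{<\mathbb{N}}$-ary function symbol $\tilde G$ for each $G:\mathbb{N}^{<\mathbb{N}}\to\mathbb{N}$ (applicable to any finite number of arguments); a unary function symbol $\mathbf{f}$; and a symbol $\cdots_x$ for each variable $x$. Besides the usual terms, for $\mathbb{N}^{<\mathbb{N}}$-ary $G$, terms $u,v$ and variable $x$, $G(u(\mathbf{0}),\cdots_x,u(v))$ is a term with free variables $(FV(u)\setminus\{x\})\cup FV(v)$. Formulas are built as usual. For $f:\mathbb{N}\to\mathbb{N}$,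 $\mathscr{M}_f$ is the structure on $\mathbb{N}$ interpreting every symbol as the object it names and $\mathbf{f}$ as $f$; terms are evaluated as usual, plus $G(u(\mathbf{0}),\cdots_x,u(v))^{s}=G\big(u(x|\mathbf{0})^{s},\ldots,u(x|\overline{v^{s}})^{s}\big)$ under an assignment $s$, where $u(x|c)$ is substitution of the constant $c$ for $x$ in $u$. A sentence $\phi$ defines $S\subseteq\mathbb{N}^{\mathbb{N}}$ if for every $f:\mathbb{N}\to\mathbb{N}$, $\mathscr{M}_f\models\phi$ iff $f\in S$. *)

theory Defs
  imports Main
begin

text \<open>Symbols that
name semantic objects carry that object (the symbol tilde-w names w, etc.).
An n-ary function w : N^n -> N is represented by a function on lists together
with its arity n; only its values on lists of length n matter.\<close>

datatype trm =
    Var nat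
  | Cst nat
  | FnSym nat "nat list \<Rightarrow> nat" "trm list"
  | GSym "nat list \<Rightarrow> nat" "trm list"
  | FSym trm
  | Ell "nat list \<Rightarrow> nat" trm nat trm       \<comment> \<open>Ell G u x v  =  G(u(0), ..._x, u(v))\<close>

datatype fm =
    FFalse
  | Eq trm trm
  | PredSym nat "nat list \<Rightarrow> bool" "trm list"
  | Neg fm
  | Conj fm fm
  | Disj fm fm
  | Imp fm fm
  | All nat fm
  | Ex nat fm

fun wf_trm :: "trm \<Rightarrow> bool" where
  "wf_trm (Var x) = True"
| "wf_trm (Cst n) = True"
| "wf_trm (FnSym n w ts) = (0 < n \<and> length ts = n \<and> (\<forall>t\<in>set ts. wf_trm t))"
| "wf_trm (GSym g ts) = (\<forall>t\<in>set ts. wf_trm t)"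
| "wf_trm (FSym t) = wf_trm t"
| "wf_trm (Ell g u x v) = (wf_trm u \<and> wf_trm v)"

fun wf_fm :: "fm \<Rightarrow> bool" where
  "wf_fm FFalse = True"
| "wf_fm (Eq t u) = (wf_trm t \<and> wf_trm u)"
| "wf_fm (PredSym n p ts) = (0 < n \<and> length ts = n \<and> (\<forall>t\<in>set ts. wf_trm t))"
| "wf_fm (Neg a) = wf_fm a"
| "wf_fm (Conj a b) = (wf_fm a \<and> wf_fm b)"
| "wf_fm (Disj a b) = (wf_fm a \<and> wf_fm b)"
| "wf_fm (Imp a b) = (wf_fm a \<and> wf_fm b)"
| "wf_fm (All x a) = wf_fm a"
| "wf_fm (Ex x a) = wf_fm a"

fun fv_trm :: "trm \<Rightarrow> nat set" where
  "fv_trm (Var x) = {x}"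
| "fv_trm (Cst n) = {}"
| "fv_trm (FnSym n w ts) = (\<Union>t\<in>set ts. fv_trm t)"
| "fv_trm (GSym g ts) = (\<Union>t\<in>set ts. fv_trm t)"
| "fv_trm (FSym t) = fv_trm t"
| "fv_trm (Ell g u x v) = (fv_trm u - {x}) \<union> fv_trm v"

fun fv_fm :: "fm \<Rightarrow> nat set" where
  "fv_fm FFalse = {}"
| "fv_fm (Eq t u) = fv_trm t \<union> fv_trm u"
| "fv_fm (PredSym n p ts) = (\<Union>t\<in>set ts. fv_trm t)"
| "fv_fm (Neg a) = fv_fm a"
| "fv_fm (Conj a b) = fv_fm a \<union> fv_fm b"
| "fv_fm (Disj a b) = fv_fm a \<union> fv_fm b"
| "fv_fm (Imp a b) = fv_fm a \<union> fv_fm b"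
| "fv_fm (All x a) = fv_fm a - {x}"
| "fv_fm (Ex x a) = fv_fm a - {x}"

definition sentence :: "fm \<Rightarrow> bool" where
  "sentence \<phi> \<longleftrightarrow> wf_fm \<phi> \<and> fv_fm \<phi> = {}"

fun qfree :: "fm \<Rightarrow> bool" where
  "qfree FFalse = True"
| "qfree (Eq t u) = True"
| "qfree (PredSym n p ts) = True"
| "qfree (Neg a) = qfree a"
| "qfree (Conj a b) = (qfree a \<and> qfree b)"
| "qfree (Disj a b) = (qfree a \<and> qfree b)"
| "qfree (Imp a b) = (qfree a \<and> qfree b)"
| "qfree (All x a) = False"
| "qfree (Ex x a) = False"

text \<open>The ellipsis term
G(u(0), ..._x, u(v)) evaluates to G(u(x|0)^s, ..., u(x|v^s)^s); evaluating the
substitution instance u(x|c) under s is evaluating u under s with x reassigned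
to c.\<close>
fun eval :: "(nat \<Rightarrow> nat) \<Rightarrow> (nat \<Rightarrow> nat) \<Rightarrow> trm \<Rightarrow> nat" where
  "eval f s (Var x) = s x"
| "eval f s (Cst n) = n"
| "eval f s (FnSym n w ts) = w (map (eval f s) ts)"
| "eval f s (GSym g ts) = g (map (eval f s) ts)"
| "eval f s (FSym t) = f (eval f s t)"
| "eval f s (Ell g u x v) = g (map (\<lambda>i. eval f (s(x := i)) u) [0..<Suc (eval f s v)])"

fun sat :: "(nat \<Rightarrow> nat) \<Rightarrow> (nat \<Rightarrow> nat) \<Rightarrow> fm \<Rightarrow> bool" where
  "sat f s FFalse = False"
| "sat f s (Eq t u) = (eval f s t = eval f s u)"
| "sat f s (PredSym n p ts) = p (map (eval f s) ts)"
| "sat f s (Neg a) = (\<not> sat f s a)"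
| "sat f s (Conj a b) = (sat f s a \<and> sat f s b)"
| "sat f s (Disj a b) = (sat f s a \<or> sat f s b)"
| "sat f s (Imp a b) = (sat f s a \<longrightarrow> sat f s b)"
| "sat f s (All x a) = (\<forall>n. sat f (s(x := n)) a)"
| "sat f s (Ex x a) = (\<exists>n. sat f (s(x := n)) a)"

definition models :: "(nat \<Rightarrow> nat) \<Rightarrow> fm \<Rightarrow> bool" where
  "models f \<phi> \<longleftrightarrow> (\<forall>s. sat f s \<phi>)"

definition defines_set :: "fm \<Rightarrow> (nat \<Rightarrow> nat) set \<Rightarrow> bool" where
  "defines_set \<phi> S \<longleftrightarrow> sentence \<phi> \<and> (\<forall>f. models f \<phi> \<longleftrightarrow> f \<in> S)"

definition guesser :: "(nat list \<Rightarrow> nat) \<Rightarrow> (nat \<Rightarrow> nat) set \<Rightarrow> bool" where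
  "guesser G S \<longleftrightarrow> (\<forall>\<sigma>. G \<sigma> \<in> {0, 1}) \<and>
     (\<forall>f. \<exists>m>0. \<forall>n>m. G (map f [0..<Suc n]) = (if f \<in> S then 1 else 0))"

definition guessable :: "(nat \<Rightarrow> nat) set \<Rightarrow> bool" where
  "guessable S \<longleftrightarrow> (\<exists>G. guesser G S)"

end

theory Submission
  imports Defs
begin

lemma fin_bound:
  fixes P :: "nat \<Rightarrow> 'b \<Rightarrow> bool"
  assumes "\<forall>t\<in>set ts. \<exists>N. \<forall>M\<ge>N. P M t"
  shows "\<exists>N. \<forall>M\<ge>N. \<forall>t\<in>set ts. P M t"
  using assms
proof (induction ts)
  case Nil then show ?case by auto
next
  case (Cons a ts)
  then obtain N1 where h1: "\<forall>M\<ge>N1. P M a" by auto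
  from Cons obtain N2 where h2: "\<forall>M\<ge>N2. \<forall>t\<in>set ts. P M t" by auto
  have "\<forall>M\<ge>max N1 N2. \<forall>t\<in>set (a # ts). P M t"
  proof (intro allI impI)
    fix M assume "max N1 N2 \<le> M"
    then have "N1 \<le> M" "N2 \<le> M" by auto
    then show "\<forall>t\<in>set (a # ts). P M t" using h1 h2 by auto
  qed
  then show ?case by blast
qed

lemma eval_cont:
  "\<exists>N. \<forall>M\<ge>N. \<forall>g. (\<forall>i<M. g i = f i) \<longrightarrow> eval g s t = eval f s t"
proof (induction t arbitrary: s)
  case (Var x) show ?case by auto
next
  case (Cst n) show ?case by auto
next
  case (FnSym n w ts)
  then have "\<forall>t\<in>set ts. \<exists>N. \<forall>M\<ge>N. \<forall>g. (\<forall>i<M. g i = f i) \<longrightarrow> eval g s t = eval f s t" by blast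
  from fin_bound[OF this] obtain N where N: "\<forall>M\<ge>N. \<forall>t\<in>set ts. \<forall>g. (\<forall>i<M. g i = f i) \<longrightarrow> eval g s t = eval f s t" by blast
  show ?case
  proof (intro exI[of _ N] allI impI)
    fix M g assume "N \<le> M" "\<forall>i<M. g i = f i"
    with N have "\<forall>t\<in>set ts. eval g s t = eval f s t" by blast
    then have "map (eval g s) ts = map (eval f s) ts" by (intro map_cong) auto
    then show "eval g s (FnSym n w ts) = eval f s (FnSym n w ts)" unfolding eval.simps by (rule arg_cong)
  qed
next
  case (GSym w ts)
  then have "\<forall>t\<in>set ts. \<exists>N. \<forall>M\<ge>N. \<forall>g. (\<forall>i<M. g i = f i) \<longrightarrow> eval g s t = eval f s t" by blast
  from fin_bound[OF this] obtain N where N: "\<forall>M\<ge>N. \<forall>t\<in>set ts. \<forall>g. (\<forall>i<M. g i = f i) \<longrightarrow> eval g s t = eval f s t" by blast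
  show ?case
  proof (intro exI[of _ N] allI impI)
    fix M g assume "N \<le> M" "\<forall>i<M. g i = f i"
    with N have "\<forall>t\<in>set ts. eval g s t = eval f s t" by blast
    then have "map (eval g s) ts = map (eval f s) ts" by (intro map_cong) auto
    then show "eval g s (GSym w ts) = eval f s (GSym w ts)" unfolding eval.simps by (rule arg_cong)
  qed
next
  case (FSym t)
  obtain N where N: "\<forall>M\<ge>N. \<forall>g. (\<forall>i<M. g i = f i) \<longrightarrow> eval g s t = eval f s t" using FSym by blast
  show ?case
  proof (intro exI[of _ "max N (Suc (eval f s t))"] allI impI)
    fix M g assume hM: "max N (Suc (eval f s t)) \<le> M" "\<forall>i<M. g i = f i"
    have "N \<le> M" using hM(1) by simp
    then have e: "eval g s t = eval f s t" using N hM(2) by blast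
    have "eval f s t < M" using hM(1) by simp
    then have "g (eval f s t) = f (eval f s t)" using hM(2) by blast
    then show "eval g s (FSym t) = eval f s (FSym t)" using e by simp
  qed
next
  case (Ell G u x v)
  obtain Nv where Nv: "\<forall>M\<ge>Nv. \<forall>g. (\<forall>i<M. g i = f i) \<longrightarrow> eval g s v = eval f s v" using Ell by blast
  have "\<forall>j\<in>set [0..<Suc (eval f s v)]. \<exists>N. \<forall>M\<ge>N. \<forall>g. (\<forall>i<M. g i = f i) \<longrightarrow> eval g (s(x:=j)) u = eval f (s(x:=j)) u"
    using Ell by blast
  from fin_bound[OF this] obtain Nu where Nu: "\<forall>M\<ge>Nu. \<forall>j\<in>set [0..<Suc (eval f s v)]. \<forall>g. (\<forall>i<M. g i = f i) \<longrightarrow> eval g (s(x:=j)) u = eval f (s(x:=j)) u" by blast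
  show ?case
  proof (intro exI[of _ "max Nv Nu"] allI impI)
    fix M g assume hM: "max Nv Nu \<le> M" "\<forall>i<M. g i = f i"
    have "Nv \<le> M" "Nu \<le> M" using hM(1) by simp_all
    then have e: "eval g s v = eval f s v" and
      h: "\<forall>j\<in>set [0..<Suc (eval f s v)]. eval g (s(x:=j)) u = eval f (s(x:=j)) u"
      using Nv Nu hM(2) by blast+
    have "map (\<lambda>i. eval g (s(x:=i)) u) [0..<Suc (eval f s v)] = map (\<lambda>i. eval f (s(x:=i)) u) [0..<Suc (eval f s v)]"
      by (rule map_cong) (use h in auto)
    then show "eval g s (Ell G u x v) = eval f s (Ell G u x v)" unfolding eval.simps e by (rule arg_cong)
  qed
qed

lemma comb2:
  fixes A B :: "nat \<Rightarrow> bool"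
  assumes "\<exists>N. \<forall>M\<ge>N. A M" "\<exists>N. \<forall>M\<ge>N. B M"
  shows "\<exists>N. \<forall>M\<ge>N. A M \<and> B M"
proof -
  obtain N1 N2 where h1: "\<forall>M\<ge>N1. A M" and h2: "\<forall>M\<ge>N2. B M" using assms by blast
  have "\<forall>M\<ge>max N1 N2. A M \<and> B M"
  proof (intro allI impI)
    fix M assume "max N1 N2 \<le> M"
    then have "N1 \<le> M" "N2 \<le> M" by simp_all
    then show "A M \<and> B M" using h1 h2 by blast
  qed
  then show ?thesis by blast
qed

lemma sat_cont:
  "qfree \<phi> \<Longrightarrow> \<exists>N. \<forall>M\<ge>N. \<forall>g. (\<forall>i<M. g i = f i) \<longrightarrow> sat g s \<phi> = sat f s \<phi>"
proof (induction \<phi>)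
  case FFalse then show ?case by simp
next
  case (Eq t u)
  obtain N where N: "\<forall>M\<ge>N. (\<forall>g. (\<forall>i<M. g i = f i) \<longrightarrow> eval g s t = eval f s t) \<and>
     (\<forall>g. (\<forall>i<M. g i = f i) \<longrightarrow> eval g s u = eval f s u)"
    using comb2[OF eval_cont eval_cont] by blast
  show ?case
  proof (intro exI[of _ N] allI impI)
    fix M g assume "N \<le> M" "\<forall>i<M. g i = f i"
    then have "eval g s t = eval f s t" "eval g s u = eval f s u" using N by blast+
    then show "sat g s (Eq t u) = sat f s (Eq t u)" by simp
  qed
next
  case (PredSym n p ts)
  have "\<forall>t\<in>set ts. \<exists>N. \<forall>M\<ge>N. \<forall>g. (\<forall>i<M. g i = f i) \<longrightarrow> eval g s t = eval f s t" using eval_cont by blast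
  from fin_bound[OF this] obtain N where N: "\<forall>M\<ge>N. \<forall>t\<in>set ts. \<forall>g. (\<forall>i<M. g i = f i) \<longrightarrow> eval g s t = eval f s t" by blast
  show ?case
  proof (intro exI[of _ N] allI impI)
    fix M g assume "N \<le> M" "\<forall>i<M. g i = f i"
    with N have "\<forall>t\<in>set ts. eval g s t = eval f s t" by blast
    then have "map (eval g s) ts = map (eval f s) ts" by (intro map_cong) auto
    then show "sat g s (PredSym n p ts) = sat f s (PredSym n p ts)" unfolding sat.simps by (rule arg_cong)
  qed
next
  case (Neg a)
  then obtain N where N: "\<forall>M\<ge>N. \<forall>g. (\<forall>i<M. g i = f i) \<longrightarrow> sat g s a = sat f s a" by auto
  show ?case
  proof (intro exI[of _ N] allI impI)
    fix M g assume "N \<le> M" "\<forall>i<M. g i = f i"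
    then have "sat g s a = sat f s a" using N by blast
    then show "sat g s (Neg a) = sat f s (Neg a)" by simp
  qed
next
  case (Conj a b)
  then have "\<exists>N. \<forall>M\<ge>N. \<forall>g. (\<forall>i<M. g i = f i) \<longrightarrow> sat g s a = sat f s a"
    "\<exists>N. \<forall>M\<ge>N. \<forall>g. (\<forall>i<M. g i = f i) \<longrightarrow> sat g s b = sat f s b" by simp_all
  from comb2[OF this] obtain N where N: "\<forall>M\<ge>N. (\<forall>g. (\<forall>i<M. g i = f i) \<longrightarrow> sat g s a = sat f s a) \<and>
     (\<forall>g. (\<forall>i<M. g i = f i) \<longrightarrow> sat g s b = sat f s b)" by blast
  show ?case
  proof (intro exI[of _ N] allI impI)
    fix M g assume "N \<le> M" "\<forall>i<M. g i = f i"
    then have "sat g s a = sat f s a" "sat g s b = sat f s b" using N by blast+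
    then show "sat g s (Conj a b) = sat f s (Conj a b)" by simp
  qed
next
  case (Disj a b)
  then have "\<exists>N. \<forall>M\<ge>N. \<forall>g. (\<forall>i<M. g i = f i) \<longrightarrow> sat g s a = sat f s a"
    "\<exists>N. \<forall>M\<ge>N. \<forall>g. (\<forall>i<M. g i = f i) \<longrightarrow> sat g s b = sat f s b" by simp_all
  from comb2[OF this] obtain N where N: "\<forall>M\<ge>N. (\<forall>g. (\<forall>i<M. g i = f i) \<longrightarrow> sat g s a = sat f s a) \<and>
     (\<forall>g. (\<forall>i<M. g i = f i) \<longrightarrow> sat g s b = sat f s b)" by blast
  show ?case
  proof (intro exI[of _ N] allI impI)
    fix M g assume "N \<le> M" "\<forall>i<M. g i = f i"
    then have "sat g s a = sat f s a" "sat g s b = sat f s b" using N by blast+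
    then show "sat g s (Disj a b) = sat f s (Disj a b)" by simp
  qed
next
  case (Imp a b)
  then have "\<exists>N. \<forall>M\<ge>N. \<forall>g. (\<forall>i<M. g i = f i) \<longrightarrow> sat g s a = sat f s a"
    "\<exists>N. \<forall>M\<ge>N. \<forall>g. (\<forall>i<M. g i = f i) \<longrightarrow> sat g s b = sat f s b" by simp_all
  from comb2[OF this] obtain N where N: "\<forall>M\<ge>N. (\<forall>g. (\<forall>i<M. g i = f i) \<longrightarrow> sat g s a = sat f s a) \<and>
     (\<forall>g. (\<forall>i<M. g i = f i) \<longrightarrow> sat g s b = sat f s b)" by blast
  show ?case
  proof (intro exI[of _ N] allI impI)
    fix M g assume "N \<le> M" "\<forall>i<M. g i = f i"
    then have "sat g s a = sat f s a" "sat g s b = sat f s b" using N by blast+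
    then show "sat g s (Imp a b) = sat f s (Imp a b)" by simp
  qed
next
  case (All x a) then show ?case by simp
next
  case (Ex x a) then show ?case by simp
qed

lemma eval_fv: "(\<forall>v\<in>fv_trm t. s v = s' v) \<Longrightarrow> eval f s t = eval f s' t"
proof (induction t arbitrary: s s')
  case (Ell G u x v)
  have e: "eval f s v = eval f s' v" using Ell by auto
  have "\<And>i. eval f (s(x:=i)) u = eval f (s'(x:=i)) u" using Ell by auto
  then show ?case by (simp add: e)
next
  case (FnSym n w ts)
  have "map (eval f s) ts = map (eval f s') ts" by (rule map_cong) (use FnSym in auto)
  then show ?case unfolding eval.simps by (rule arg_cong)
next
  case (GSym w ts)
  have "map (eval f s) ts = map (eval f s') ts" by (rule map_cong) (use GSym in auto)
  then show ?case unfolding eval.simps by (rule arg_cong)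
next
  case (FSym t)
  then have "eval f s t = eval f s' t" by auto
  then show ?case by simp
qed auto

lemma sat_fv: "(\<forall>v\<in>fv_fm \<phi>. s v = s' v) \<Longrightarrow> sat f s \<phi> = sat f s' \<phi>"
proof (induction \<phi> arbitrary: s s')
  case (Eq t u) then show ?case using eval_fv[of t s s' f] eval_fv[of u s s' f] by auto
next
  case (PredSym n p ts)
  then have "\<forall>t\<in>set ts. eval f s t = eval f s' t" using eval_fv by auto
  then show ?case by (simp cong: map_cong)
next
  case (All x a)
  have "\<And>n. sat f (s(x:=n)) a = sat f (s'(x:=n)) a" using All by auto
  then show ?case by simp
next
  case (Ex x a)
  have "\<And>n. sat f (s(x:=n)) a = sat f (s'(x:=n)) a" using Ex by auto
  then show ?case by simp
next
  case (Neg a) then show ?case by simp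
next
  case (Conj a b)
  then have "sat f s a = sat f s' a" "sat f s b = sat f s' b" by auto
  then show ?case by simp
next
  case (Disj a b)
  then have "sat f s a = sat f s' a" "sat f s b = sat f s' b" by auto
  then show ?case by simp
next
  case (Imp a b)
  then have "sat f s a = sat f s' a" "sat f s b = sat f s' b" by auto
  then show ?case by simp
qed auto

lemma models_AE:
  assumes "fv_fm (All x (Ex y \<phi>)) = {}"
  shows "models f (All x (Ex y \<phi>)) \<longleftrightarrow> (\<forall>a. \<exists>b. sat f ((\<lambda>_. 0)(x:=a, y:=b)) \<phi>)"
proof -
  have "\<And>s a b. sat f (s(x:=a,y:=b)) \<phi> = sat f ((\<lambda>_. 0)(x:=a,y:=b)) \<phi>"
    by (rule sat_fv) (use assms in auto)
  note h = this
  show ?thesis unfolding models_def sat.simps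
  proof
    assume "\<forall>s n. \<exists>na. sat f (s(x := n, y := na)) \<phi>"
    then show "\<forall>a. \<exists>b. sat f ((\<lambda>_. 0)(x := a, y := b)) \<phi>" by blast
  next
    assume r: "\<forall>a. \<exists>b. sat f ((\<lambda>_. 0)(x := a, y := b)) \<phi>"
    show "\<forall>s n. \<exists>na. sat f (s(x := n, y := na)) \<phi>"
    proof (intro allI)
      fix s n
      obtain b where "sat f ((\<lambda>_. 0)(x := n, y := b)) \<phi>" using r by blast
      then show "\<exists>na. sat f (s(x := n, y := na)) \<phi>" using h[of s n b] by blast
    qed
  qed
qed

lemma models_EA:
  assumes "fv_fm (Ex x (All y \<phi>)) = {}"
  shows "models f (Ex x (All y \<phi>)) \<longleftrightarrow> (\<exists>a. \<forall>b. sat f ((\<lambda>_. 0)(x:=a, y:=b)) \<phi>)"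
proof -
  have "\<And>s a b. sat f (s(x:=a,y:=b)) \<phi> = sat f ((\<lambda>_. 0)(x:=a,y:=b)) \<phi>"
    by (rule sat_fv) (use assms in auto)
  note h = this
  show ?thesis unfolding models_def sat.simps
  proof
    assume "\<forall>s. \<exists>n. \<forall>na. sat f (s(x := n, y := na)) \<phi>"
    then show "\<exists>a. \<forall>b. sat f ((\<lambda>_. 0)(x := a, y := b)) \<phi>" by blast
  next
    assume r: "\<exists>a. \<forall>b. sat f ((\<lambda>_. 0)(x := a, y := b)) \<phi>"
    then obtain a where a: "\<forall>b. sat f ((\<lambda>_. 0)(x := a, y := b)) \<phi>" by blast
    show "\<forall>s. \<exists>n. \<forall>na. sat f (s(x := n, y := na)) \<phi>"
      using a h by metis
  qed
qed

lemma guessable_from: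
  fixes Phi Psi :: "(nat\<Rightarrow>nat) \<Rightarrow> nat \<Rightarrow> nat \<Rightarrow> bool"
  assumes cPhi: "\<And>f a b. \<exists>N. \<forall>M\<ge>N. \<forall>g. (\<forall>i<M. g i = f i) \<longrightarrow> Phi g a b = Phi f a b"
  and cPsi: "\<And>f a b. \<exists>N. \<forall>M\<ge>N. \<forall>g. (\<forall>i<M. g i = f i) \<longrightarrow> Psi g a b = Psi f a b"
  and P: "\<And>f. f\<in>S \<longleftrightarrow> (\<forall>a. \<exists>b. Phi f a b)"
  and Q: "\<And>f. f\<in>S \<longleftrightarrow> (\<exists>a. \<forall>b. Psi f a b)"
  shows "guessable S"
proof -
  define R where "R c g b = (if even c then Psi g (c div 2) b else \<not> Phi g (c div 2) b)" for c g b
  define Ref where "Ref c \<sigma> = (\<exists>b\<le>length \<sigma>. \<forall>g. (\<forall>i<length \<sigma>. g i = \<sigma>!i) \<longrightarrow> \<not> R c g b)" for c \<sigma>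
  define G where "G \<sigma> = (if \<exists>c. \<not> Ref c \<sigma> then (if even (LEAST c. \<not> Ref c \<sigma>) then 1 else 0) else (0::nat))" for \<sigma>
  have cR: "\<exists>N. \<forall>M\<ge>N. \<forall>g. (\<forall>i<M. g i = f i) \<longrightarrow> R c g b = R c f b" for c f b
  proof (cases "even c")
    case True then show ?thesis unfolding R_def using cPsi[of f "c div 2" b] by simp
  next
    case False then show ?thesis unfolding R_def using cPhi[of f "c div 2" b] by simp
  qed
  have W: "even c \<longleftrightarrow> f \<in> S" if h: "\<forall>b. R c f b" for f c
  proof (cases "even c")
    case True then show ?thesis using h Q[of f] unfolding R_def by auto
  next
    case False then show ?thesis using h P[of f] unfolding R_def by auto
  qed
  have ex: "\<exists>c. \<forall>b. R c f b" for f
  proof (cases "f \<in> S")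
    case True
    then obtain a where "\<forall>b. Psi f a b" using Q by blast
    then show ?thesis unfolding R_def by (intro exI[of _ "2*a"]) auto
  next
    case False
    then obtain a where "\<forall>b. \<not> Phi f a b" using P by blast
    then show ?thesis unfolding R_def by (intro exI[of _ "2*a+1"]) auto
  qed
  have "guesser G S"
    unfolding guesser_def
  proof (intro conjI allI)
    fix \<sigma> show "G \<sigma> \<in> {0,1}" by (simp add: G_def)
  next
    fix f
    define c0 where "c0 = (LEAST c. \<forall>b. R c f b)"
    have c0: "\<forall>b. R c0 f b" unfolding c0_def by (rule LeastI_ex[OF ex])
    have below: "\<exists>N. \<forall>n\<ge>N. Ref c (map f [0..<Suc n])" if "c < c0" for c
    proof -
      have "\<not>(\<forall>b. R c f b)" using not_less_Least[OF that[unfolded c0_def]] .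
      then obtain b where b: "\<not> R c f b" by blast
      obtain N where N: "\<forall>M\<ge>N. \<forall>g. (\<forall>i<M. g i = f i) \<longrightarrow> R c g b = R c f b" using cR by blast
      show ?thesis
      proof (intro exI[of _ "max N b"] allI impI)
        fix n assume n: "max N b \<le> n"
        show "Ref c (map f [0..<Suc n])"
          unfolding Ref_def
        proof (intro exI[of _ b] conjI allI impI)
          show "b \<le> length (map f [0..<Suc n])" using n by simp
          fix g assume "\<forall>i<length (map f [0..<Suc n]). g i = map f [0..<Suc n] ! i"
          then have ag: "\<forall>i<Suc n. g i = f i" by (simp del: upt_Suc)
          have "N \<le> Suc n" using n by simp
          then have "R c g b = R c f b" using N ag by blast
          then show "\<not> R c g b" using b by simp
        qed
      qed
    qed
    have "\<forall>c\<in>set [0..<c0]. \<exists>N. \<forall>n\<ge>N. Ref c (map f [0..<Suc n])" using below by auto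
    from fin_bound[OF this] obtain N where N: "\<forall>n\<ge>N. \<forall>c\<in>set [0..<c0]. Ref c (map f [0..<Suc n])" by blast
    have notref: "\<not> Ref c0 (map f [0..<Suc n])" for n
    proof
      assume "Ref c0 (map f [0..<Suc n])"
      then obtain b where bb: "\<forall>g. (\<forall>i<length (map f [0..<Suc n]). g i = map f [0..<Suc n] ! i) \<longrightarrow> \<not> R c0 g b"
        unfolding Ref_def by blast
      have "\<forall>i<length (map f [0..<Suc n]). f i = map f [0..<Suc n] ! i" by (simp del: upt_Suc)
      then have "\<not> R c0 f b" using bb by blast
      with c0 show False by blast
    qed
    show "\<exists>m>0. \<forall>n>m. G (map f [0..<Suc n]) = (if f \<in> S then 1 else 0)"
    proof (intro exI[of _ "Suc N"] conjI allI impI)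
      show "0 < Suc N" by simp
      fix n assume n: "Suc N < n"
      let ?\<sigma> = "map f [0..<Suc n]"
      have L: "(LEAST c. \<not> Ref c ?\<sigma>) = c0"
      proof (rule Least_equality)
        show "\<not> Ref c0 ?\<sigma>" by (rule notref)
        fix y assume ny: "\<not> Ref y ?\<sigma>"
        show "c0 \<le> y"
        proof (rule ccontr)
          assume "\<not> c0 \<le> y"
          then have "y \<in> set [0..<c0]" by simp
          moreover have "N \<le> n" using n by simp
          ultimately have "Ref y ?\<sigma>" using N by blast
          with ny show False by blast
        qed
      qed
      have "\<exists>c. \<not> Ref c ?\<sigma>" using notref by blast
      then show "G ?\<sigma> = (if f \<in> S then 1 else 0)" unfolding G_def L using W[OF c0] by simp
    qed
  qed
  then show ?thesis unfolding guessable_def by blast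
qed

theorem theorem4p7:
  fixes S :: "(nat \<Rightarrow> nat) set"
  shows "guessable S \<longleftrightarrow>
    (\<exists>x y \<phi>. qfree \<phi> \<and> defines_set (All x (Ex y \<phi>)) S) \<and>
    (\<exists>x y \<psi>. qfree \<psi> \<and> defines_set (Ex x (All y \<psi>)) S)"
proof
  assume "guessable S"
  then obtain G where G: "guesser G S" unfolding guessable_def by blast
  define T where "T = Ell G (FSym (Var 2)) 2 (FnSym 2 (\<lambda>l. l!0 + l!1) [Var 0, Var 1])"
  define \<phi> where "\<phi> = Eq T (Cst 1)"
  have ev: "sat f (s(0:=a, 1:=b)) \<phi> \<longleftrightarrow> G (map f [0..<Suc (a+b)]) = 1" for f s a b
  proof -
    have "eval f (s(0:=a, 1:=b)) (FnSym 2 (\<lambda>l. l!0 + l!1) [Var 0, Var 1]) = a + b" by simp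
    moreover have "\<And>t. eval f t (FSym (Var 2)) = f (t 2)" by simp
    ultimately show ?thesis unfolding \<phi>_def T_def sat.simps eval.simps(6) by (simp del: upt_Suc)
  qed
  have qf: "qfree \<phi>" unfolding \<phi>_def by simp
  have fvT: "fv_fm \<phi> = {0,1}" unfolding \<phi>_def T_def by auto
  have wf: "wf_fm \<phi>" unfolding \<phi>_def T_def by simp
  have pi: "f \<in> S \<longleftrightarrow> (\<forall>a. \<exists>b. G (map f [0..<Suc (a+b)]) = 1)" for f
  proof -
    obtain m where m: "\<forall>n>m. G (map f [0..<Suc n]) = (if f \<in> S then 1 else 0)"
      using G unfolding guesser_def by blast
    show ?thesis
    proof
      assume fS: "f \<in> S"
      show "\<forall>a. \<exists>b. G (map f [0..<Suc (a+b)]) = 1"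
      proof
        fix a
        have "a + Suc m > m" by simp
        then have "G (map f [0..<Suc (a + Suc m)]) = (if f \<in> S then 1 else 0)" using m by blast
        then have "G (map f [0..<Suc (a + Suc m)]) = 1" using fS by simp
        then show "\<exists>b. G (map f [0..<Suc (a+b)]) = 1" by blast
      qed
    next
      assume h: "\<forall>a. \<exists>b. G (map f [0..<Suc (a+b)]) = 1"
      then obtain b where b1: "G (map f [0..<Suc (Suc m+b)]) = 1" by blast
      have "Suc m + b > m" by simp
      then have "G (map f [0..<Suc (Suc m+b)]) = (if f \<in> S then 1 else 0)" using m by blast
      with b1 show "f \<in> S" by (cases "f \<in> S") simp_all
    qed
  qed
  have sg: "f \<in> S \<longleftrightarrow> (\<exists>a. \<forall>b. G (map f [0..<Suc (a+b)]) = 1)" for f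
  proof -
    obtain m where m: "\<forall>n>m. G (map f [0..<Suc n]) = (if f \<in> S then 1 else 0)"
      using G unfolding guesser_def by blast
    show ?thesis
    proof
      assume fS: "f \<in> S"
      have "\<forall>b. G (map f [0..<Suc (Suc m + b)]) = 1"
      proof
        fix b
        have "Suc m + b > m" by simp
        then have "G (map f [0..<Suc (Suc m + b)]) = (if f \<in> S then 1 else 0)" using m by blast
        then show "G (map f [0..<Suc (Suc m + b)]) = 1" using fS by simp
      qed
      then show "\<exists>a. \<forall>b. G (map f [0..<Suc (a+b)]) = 1" by blast
    next
      assume h: "\<exists>a. \<forall>b. G (map f [0..<Suc (a+b)]) = 1"
      then obtain a where b1: "G (map f [0..<Suc (a+Suc m)]) = 1" by blast
      have "a + Suc m > m" by simp
      then have "G (map f [0..<Suc (a+Suc m)]) = (if f \<in> S then 1 else 0)" using m by blast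
      with b1 show "f \<in> S" by (cases "f \<in> S") simp_all
    qed
  qed
  have m1: "models f (All 0 (Ex 1 \<phi>)) \<longleftrightarrow> (\<forall>a. \<exists>b. G (map f [0..<Suc (a+b)]) = 1)" for f
    unfolding models_def sat.simps ev by simp
  have m2: "models f (Ex 0 (All 1 \<phi>)) \<longleftrightarrow> (\<exists>a. \<forall>b. G (map f [0..<Suc (a+b)]) = 1)" for f
    unfolding models_def sat.simps ev by simp
  have fv1: "fv_fm (All 0 (Ex 1 \<phi>)) = {}" "fv_fm (Ex 0 (All 1 \<phi>)) = {}" using fvT by auto
  have "defines_set (All 0 (Ex 1 \<phi>)) S"
    unfolding defines_set_def sentence_def using wf fv1 m1 pi by simp
  moreover have "defines_set (Ex 0 (All 1 \<phi>)) S"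
    unfolding defines_set_def sentence_def using wf fv1 m2 sg by simp
  ultimately show "(\<exists>x y \<phi>. qfree \<phi> \<and> defines_set (All x (Ex y \<phi>)) S) \<and>
    (\<exists>x y \<psi>. qfree \<psi> \<and> defines_set (Ex x (All y \<psi>)) S)" using qf by blast
next
  assume "(\<exists>x y \<phi>. qfree \<phi> \<and> defines_set (All x (Ex y \<phi>)) S) \<and>
    (\<exists>x y \<psi>. qfree \<psi> \<and> defines_set (Ex x (All y \<psi>)) S)"
  then obtain x y \<phi> x' y' \<psi> where q1: "qfree \<phi>" and d1: "defines_set (All x (Ex y \<phi>)) S"
    and q2: "qfree \<psi>" and d2: "defines_set (Ex x' (All y' \<psi>)) S" by blast
  show "guessable S"
  proof (rule guessable_from[where Phi="\<lambda>f a b. sat f ((\<lambda>_. 0)(x:=a, y:=b)) \<phi>"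
        and Psi="\<lambda>f a b. sat f ((\<lambda>_. 0)(x':=a, y':=b)) \<psi>"])
    show "\<And>f a b. \<exists>N. \<forall>M\<ge>N. \<forall>g. (\<forall>i<M. g i = f i) \<longrightarrow>
        sat g ((\<lambda>_. 0)(x:=a, y:=b)) \<phi> = sat f ((\<lambda>_. 0)(x:=a, y:=b)) \<phi>"
      using sat_cont[OF q1] by blast
    show "\<And>f a b. \<exists>N. \<forall>M\<ge>N. \<forall>g. (\<forall>i<M. g i = f i) \<longrightarrow>
        sat g ((\<lambda>_. 0)(x':=a, y':=b)) \<psi> = sat f ((\<lambda>_. 0)(x':=a, y':=b)) \<psi>"
      using sat_cont[OF q2] by blast
    show "\<And>f. f\<in>S \<longleftrightarrow> (\<forall>a. \<exists>b. sat f ((\<lambda>_. 0)(x:=a, y:=b)) \<phi>)"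
    proof -
      fix f
      have fv: "fv_fm (All x (Ex y \<phi>)) = {}" and eq: "\<forall>f. models f (All x (Ex y \<phi>)) \<longleftrightarrow> f \<in> S"
        using d1 unfolding defines_set_def sentence_def by blast+
      have "f \<in> S \<longleftrightarrow> models f (All x (Ex y \<phi>))" using eq by blast
      also have "\<dots> \<longleftrightarrow> (\<forall>a. \<exists>b. sat f ((\<lambda>_. 0)(x:=a, y:=b)) \<phi>)" by (rule models_AE[OF fv])
      finally show "f\<in>S \<longleftrightarrow> (\<forall>a. \<exists>b. sat f ((\<lambda>_. 0)(x:=a, y:=b)) \<phi>)" .
    qed
    show "\<And>f. f\<in>S \<longleftrightarrow> (\<exists>a. \<forall>b. sat f ((\<lambda>_. 0)(x':=a, y':=b)) \<psi>)"
    proof -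
      fix f
      have fv: "fv_fm (Ex x' (All y' \<psi>)) = {}" and eq: "\<forall>f. models f (Ex x' (All y' \<psi>)) \<longleftrightarrow> f \<in> S"
        using d2 unfolding defines_set_def sentence_def by blast+
      have "f \<in> S \<longleftrightarrow> models f (Ex x' (All y' \<psi>))" using eq by blast
      also have "\<dots> \<longleftrightarrow> (\<exists>a. \<forall>b. sat f ((\<lambda>_. 0)(x':=a, y':=b)) \<psi>)" by (rule models_EA[OF fv])
      finally show "f\<in>S \<longleftrightarrow> (\<exists>a. \<forall>b. sat f ((\<lambda>_. 0)(x':=a, y':=b)) \<psi>)" .
    qed
  qed
qed

end
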